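(* Let $\alpha\in(0,1)$ and let $X_1,X_2,Y$ be real-valued random variables on a probability space $(\Omega,\mathcal A,\mathbb Q)$. If $\mathbb E_{\mathbb Q}\,\mathrm S^{\rm E}_{\alpha,\theta}(X_1,Y)\le\mathbb E_{\mathbb Q}\,\mathrm S^{\rm E}_{\alpha,\theta}(X_2,Y)$ for every $\theta\in\mathbb R$, then $X_1$ dominates $X_2$ as an $\alpha$-expectile forecast, i.e. $\mathbb E_{\mathbb Q}\,\mathrm S(X_1,Y)\le\mathbb E_{\mathbb Q}\,\mathrm S(X_2,Y)$ (expectations in $[0,\infty]$) for every $\mathrm S\in\mathcal S^{\rm E}_\alpha$.
   Context: $(t)_+=\max(t,0)$. For a convex $\phi:\mathbb R\to\mathbb R$, $\phi'$ denotes its left-hand derivative. $\mathcal S^{\rm E}_\alpha$ is the class of all scoring functions $\mathrm S(x,y)=|\mathbb 1(y<x)-\alpha|\,(\phi(y)-\phi(x)-\phi'(x)(y-x))$, $x,y\in\mathbb R$, with $\phi$ convex (these are nonnegative). The elementary expectile scoring function is $\mathrm S^{\rm E}_{\alpha,\theta}(x,y)=|\mathbb 1(y<x)-\alpha|\big((y-\theta)_+-(x-\theta)_+-(y-x)\mathbb 1(\theta<x)\big)$, i.e. it equals $(1-\alpha)|y-\theta|$ if $y\le\theta<x$, $\alpha|y-\theta|$ if $x\le\theta<y$, and $0$ otherwise. *)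

theory Defs
  imports "HOL-Probability.Probability"
begin

definition left_deriv :: "(real \<Rightarrow> real) \<Rightarrow> real \<Rightarrow> real" where
  "left_deriv \<phi> x = Lim (at_left x) (\<lambda>t. (\<phi> x - \<phi> t) / (x - t))"

definition expectile_score :: "real \<Rightarrow> (real \<Rightarrow> real) \<Rightarrow> real \<Rightarrow> real \<Rightarrow> real" where
  "expectile_score \<alpha> \<phi> x y =
     \<bar>(if y < x then 1 else 0) - \<alpha>\<bar> * (\<phi> y - \<phi> x - left_deriv \<phi> x * (y - x))"

definition expectile_class :: "real \<Rightarrow> (real \<Rightarrow> real \<Rightarrow> real) set" where
  "expectile_class \<alpha> = {S. \<exists>\<phi>. convex_on UNIV \<phi> \<and> S = expectile_score \<alpha> \<phi>}"

definition elem_expectile_score :: "real \<Rightarrow> real \<Rightarrow> real \<Rightarrow> real \<Rightarrow> real" where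
  "elem_expectile_score \<alpha> \<theta> x y =
     \<bar>(if y < x then 1 else 0) - \<alpha>\<bar> *
       (max (y - \<theta>) 0 - max (x - \<theta>) 0 - (y - x) * (if \<theta> < x then 1 else 0))"

end

theory Submission
  imports Defs
begin


lemma three_chord:
  fixes f :: "real \<Rightarrow> real"
  assumes f: "convex_on UNIV f" and "a < b" "b < c"
  shows "(f b - f a)/(b-a) \<le> (f c - f a)/(c-a)" "(f c - f a)/(c-a) \<le> (f c - f b)/(c-b)"
proof -
  have e: "\<And>p q r s::real. (p - q)/(r - s) = (q - p)/(s - r)"
    by (metis minus_diff_eq minus_divide_divide)
  show "(f b - f a)/(b-a) \<le> (f c - f a)/(c-a)"
    using convex_on_slope_le(1)[OF f, of a c b] assms by (simp add: e)
  show "(f c - f a)/(c-a) \<le> (f c - f b)/(c-b)"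
    using convex_on_slope_le(2)[OF f, of a c b] assms by (simp add: e)
qed

definition lslopes :: "(real \<Rightarrow> real) \<Rightarrow> real \<Rightarrow> real set" where
  "lslopes f x = (\<lambda>t. (f x - f t)/(x - t)) ` {..<x}"

lemma lslopes_bdd:
  assumes f: "convex_on UNIV f"
  shows "bdd_above (lslopes f x)" "lslopes f x \<noteq> {}"
proof -
  have "(f x - f t)/(x - t) \<le> (f (x+1) - f x)/((x+1) - x)" if "t < x" for t
    using three_chord[OF f that, of "x+1"] by linarith
  then show "bdd_above (lslopes f x)" unfolding lslopes_def bdd_above_def by blast
  show "lslopes f x \<noteq> {}" unfolding lslopes_def by auto
qed

lemma ld_tendsto:
  assumes f: "convex_on UNIV f"
  shows "((\<lambda>t. (f x - f t)/(x - t)) \<longlongrightarrow> Sup (lslopes f x)) (at_left x)"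
proof (rule order_tendstoI)
  fix a assume "a < Sup (lslopes f x)"
  then obtain s where "s \<in> lslopes f x" "a < s"
    using less_cSup_iff[OF lslopes_bdd(2)[OF f] lslopes_bdd(1)[OF f]] by blast
  then obtain t0 where t0: "t0 < x" "a < (f x - f t0)/(x - t0)" unfolding lslopes_def by auto
  have "eventually (\<lambda>t. t \<in> {t0<..<x}) (at_left x)"
    using eventually_at_left_real[OF t0(1)] .
  then show "eventually (\<lambda>t. a < (f x - f t)/(x - t)) (at_left x)"
  proof (rule eventually_mono)
    fix t assume "t \<in> {t0<..<x}"
    then have "(f x - f t0)/(x - t0) \<le> (f x - f t)/(x - t)"
      using three_chord(2)[OF f, of t0 t x] by auto
    with t0 show "a < (f x - f t)/(x - t)" by linarith
  qed
next
  fix a assume a: "Sup (lslopes f x) < a"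
  have "eventually (\<lambda>t. t < x) (at_left x)" by (simp add: eventually_at_filter)
  then show "eventually (\<lambda>t. (f x - f t)/(x - t) < a) (at_left x)"
  proof (rule eventually_mono)
    fix t assume "t < x"
    then have "(f x - f t)/(x - t) \<le> Sup (lslopes f x)"
      by (intro cSup_upper lslopes_bdd[OF f]) (auto simp: lslopes_def)
    with a show "(f x - f t)/(x - t) < a" by linarith
  qed
qed

lemma ld_eq:
  assumes f: "convex_on UNIV f"
  shows "left_deriv f x = Sup (lslopes f x)"
  unfolding left_deriv_def using ld_tendsto[OF f] by (intro tendsto_Lim) auto

lemma slope_le_ld:
  assumes f: "convex_on UNIV f" and "t < x"
  shows "(f x - f t)/(x - t) \<le> left_deriv f x"
  unfolding ld_eq[OF f] using assms
  by (intro cSup_upper lslopes_bdd[OF f]) (auto simp: lslopes_def)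

lemma ld_le_slope:
  assumes f: "convex_on UNIV f" and "x < y"
  shows "left_deriv f x \<le> (f y - f x)/(y - x)"
  unfolding ld_eq[OF f]
proof (rule cSup_least[OF lslopes_bdd(2)[OF f]])
  fix s assume "s \<in> lslopes f x"
  then obtain t where t: "t < x" "s = (f x - f t)/(x - t)" unfolding lslopes_def by auto
  have "(f x - f t)/(x - t) \<le> (f y - f t)/(y - t)" "(f y - f t)/(y - t) \<le> (f y - f x)/(y - x)"
    using three_chord[OF f t(1) assms(2)] by auto
  then show "s \<le> (f y - f x)/(y - x)" using t by linarith
qed

lemma ld_mono:
  assumes f: "convex_on UNIV f" and "x \<le> y"
  shows "left_deriv f x \<le> left_deriv f y"
  using ld_le_slope[OF f, of x y] slope_le_ld[OF f, of x y] assms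
  by (cases "x = y") auto



lemma ld_left_cont:
  assumes f: "convex_on UNIV f"
  shows "(left_deriv f \<longlongrightarrow> left_deriv f x) (at_left x)"
proof (rule order_tendstoI)
  fix a assume "a < left_deriv f x"
  then have "a < Sup (lslopes f x)" using ld_eq[OF f] by simp
  then obtain s where "s \<in> lslopes f x" "a < s"
    using less_cSup_iff[OF lslopes_bdd(2)[OF f] lslopes_bdd(1)[OF f]] by blast
  then obtain t0 where t0: "t0 < x" "a < (f x - f t0)/(x - t0)" unfolding lslopes_def by auto
  have cont: "continuous_on UNIV f" using convex_on_continuous[OF _ f] by simp
  have "isCont f x" using cont by (simp add: continuous_on_eq_continuous_at)
  then have fx: "(f \<longlongrightarrow> f x) (at_left x)"
    by (simp add: isCont_def filterlim_at_split)
  have "((\<lambda>t. (f t - f t0)/(t - t0)) \<longlongrightarrow> (f x - f t0)/(x - t0)) (at_left x)"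
    using t0 by (intro tendsto_intros fx) auto
  then have ev1: "eventually (\<lambda>t. a < (f t - f t0)/(t - t0)) (at_left x)"
    using t0(2) order_tendstoD(1) by blast
  have ev2: "eventually (\<lambda>t. t \<in> {t0<..<x}) (at_left x)"
    using eventually_at_left_real[OF t0(1)] .
  show "eventually (\<lambda>t. a < left_deriv f t) (at_left x)"
    using ev1 ev2
  proof eventually_elim
    case (elim t)
    then show ?case using ld_le_slope[OF f, of t0 t] slope_le_ld[OF f, of t0 t] by auto
  qed
next
  fix a assume a: "left_deriv f x < a"
  have "eventually (\<lambda>t. t < x) (at_left x)" by (simp add: eventually_at_filter)
  then show "eventually (\<lambda>t. left_deriv f t < a) (at_left x)"
    proof (rule eventually_mono)
    fix t assume "t < x"
    then have "left_deriv f t \<le> left_deriv f x" using ld_mono[OF f, of t x] by simp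
    with a show "left_deriv f t < a" by simp
  qed
qed




lemma ld_slope_bounds:
  assumes f: "convex_on UNIV f" and "a \<le> b"
  shows "(b - a) * left_deriv f a \<le> f b - f a" "f b - f a \<le> (b - a) * left_deriv f b"
proof -
  show "(b - a) * left_deriv f a \<le> f b - f a"
  proof (cases "a = b")
    case False
    then have "a < b" using assms by auto
    then show ?thesis using ld_le_slope[OF f \<open>a<b\<close>] by (simp add: field_simps)
  qed simp
  show "f b - f a \<le> (b - a) * left_deriv f b"
  proof (cases "a = b")
    case False
    then have "a < b" using assms by auto
    then show ?thesis using slope_le_ld[OF f \<open>a<b\<close>] by (simp add: field_simps)
  qed simp
qed

lemma ld_integrable:
  assumes f: "convex_on UNIV f"
  shows "left_deriv f integrable_on {a..b}"
  by (intro integrable_on_mono_on) (auto simp: mono_on_def intro: ld_mono[OF f])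




lemma D_bound:
  assumes f: "convex_on UNIV f" and "a \<le> b"
  shows "\<bar>f b - f a - integral {a..b} (left_deriv f)\<bar> \<le> (b - a) * (left_deriv f b - left_deriv f a)"
proof -
  let ?g = "left_deriv f"
  have "integral {a..b} (\<lambda>_. ?g a) \<le> integral {a..b} ?g"
    by (intro integral_le ld_integrable[OF f]) (auto intro: ld_mono[OF f])
  moreover have "integral {a..b} ?g \<le> integral {a..b} (\<lambda>_. ?g b)"
    by (intro integral_le ld_integrable[OF f]) (auto intro: ld_mono[OF f])
  ultimately have "(b - a) * ?g a \<le> integral {a..b} ?g" "integral {a..b} ?g \<le> (b - a) * ?g b"
    using assms by auto
  then show ?thesis using ld_slope_bounds[OF f assms(2)] by (simp add: abs_le_iff algebra_simps)
qed




lemma D_induct: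
  assumes f: "convex_on UNIV f" and "h \<ge> 0"
  shows "\<bar>f (x + real n * h) - f x - integral {x..x + real n * h} (left_deriv f)\<bar>
     \<le> h * (left_deriv f (x + real n * h) - left_deriv f x)"
proof (induction n)
  case 0
  then show ?case by simp
next
  case (Suc n)
  let ?g = "left_deriv f"
  define c where "c = x + real n * h"
  have c2: "x + real (Suc n) * h = c + h" by (simp add: c_def algebra_simps)
  have le1: "x \<le> c" "c \<le> c + h" using assms by (auto simp: c_def)
  have comb: "integral {x..c} ?g + integral {c..c+h} ?g = integral {x..c+h} ?g"
    by (rule Henstock_Kurzweil_Integration.integral_combine[OF le1 ld_integrable[OF f]])
  have b2: "\<bar>f (c+h) - f c - integral {c..c+h} ?g\<bar> \<le> h * (?g (c+h) - ?g c)"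
    using D_bound[OF f le1(2)] by simp
  have b1: "\<bar>f c - f x - integral {x..c} ?g\<bar> \<le> h * (?g c - ?g x)"
    using Suc.IH by (simp add: c_def)
  show ?case unfolding c2 using b1 b2 comb by (simp add: abs_le_iff algebra_simps)
qed




lemma ftc_convex:
  assumes f: "convex_on UNIV f" and "a \<le> b"
  shows "(left_deriv f has_integral (f b - f a)) {a..b}"
proof -
  let ?g = "left_deriv f"
  let ?D = "\<bar>f b - f a - integral {a..b} ?g\<bar>"
  let ?C = "(b - a) * (?g b - ?g a)"
  have Cn: "?D \<le> ?C / real n" if "n > 0" for n :: nat
  proof -
    define h where "h = (b - a) / real n"
    have "b = a + real n * h" using that by (simp add: h_def)
    moreover have "h \<ge> 0" using assms that by (simp add: h_def)
    ultimately have "?D \<le> h * (?g b - ?g a)" using D_induct[OF f, of h a n] by simp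
    then show ?thesis by (simp add: h_def)
  qed
  have "?D = 0"
  proof (rule ccontr)
    assume "?D \<noteq> 0"
    then have Dp: "?D > 0" by simp
    obtain n :: nat where n: "?C / ?D < real n" using reals_Archimedean2 by blast
    have "?C \<ge> 0" using assms ld_mono[OF f assms(2)] by simp
    then have "?C / ?D \<ge> 0" using Dp by simp
    then have "real n > 0" using n by linarith
    then have "n > 0" by simp
    then have "?C < ?D * real n" using n Dp by (simp add: divide_less_eq mult.commute)
    then have "?C / real n < ?D" using \<open>n > 0\<close> by (simp add: divide_less_eq)
    with Cn[OF \<open>n>0\<close>] show False by simp
  qed
  then have "integral {a..b} ?g = f b - f a" by simp
  then show ?thesis using ld_integrable[OF f] by (metis has_integral_integral)
qed




definition nu :: "(real \<Rightarrow> real) \<Rightarrow> real measure" where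
  "nu f = interval_measure (\<lambda>t. - left_deriv f (- t))"

lemma F_mono:
  assumes f: "convex_on UNIV f" and "p \<le> q"
  shows "- left_deriv f (- p) \<le> - left_deriv f (- q)"
  using ld_mono[OF f, of "-q" "-p"] assms by simp

lemma F_rcont:
  assumes f: "convex_on UNIV f"
  shows "continuous (at_right a) (\<lambda>t. - left_deriv f (- t))"
proof -
  have "(left_deriv f \<longlongrightarrow> left_deriv f (- a)) (at_left (- a))"
    by (rule ld_left_cont[OF f])
  then have "((\<lambda>t. left_deriv f (- t)) \<longlongrightarrow> left_deriv f (- a)) (at_right a)"
    by (simp add: filterlim_at_left_to_right)
  then have "((\<lambda>t. - left_deriv f (- t)) \<longlongrightarrow> - left_deriv f (- a)) (at_right a)"
    by (intro tendsto_minus)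
  then show ?thesis by (simp add: continuous_within)
qed

lemma sets_nu [simp, measurable_cong]: "sets (nu f) = sets borel"
  by (simp add: nu_def)

lemma space_nu [simp]: "space (nu f) = UNIV"
  by (simp add: nu_def)

lemma emeasure_nu:
  assumes f: "convex_on UNIV f" and "p \<le> q"
  shows "emeasure (nu f) {p<..q} = ennreal (left_deriv f (- p) - left_deriv f (- q))"
  unfolding nu_def
  using emeasure_interval_measure_Ioc[of p q "\<lambda>t. - left_deriv f (- t)", OF assms(2) F_mono[OF f] F_rcont[OF f]]
  by simp

lemma sigma_finite_nu:
  assumes f: "convex_on UNIV f"
  shows "sigma_finite_measure (nu f)"
  unfolding nu_def by (rule sigma_finite_interval_measure[OF F_mono[OF f] F_rcont[OF f]])



lemma ftc_shift:
  assumes f: "convex_on UNIV f" and "x \<le> y"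
  shows "((\<lambda>u. left_deriv f u - left_deriv f x) has_integral (f y - f x - left_deriv f x * (y - x))) {x<..<y}"
proof -
  have "((\<lambda>u. left_deriv f u - left_deriv f x) has_integral (f y - f x - Henstock_Kurzweil_Integration.content {x..y} *\<^sub>R left_deriv f x)) {x..y}"
    by (intro has_integral_diff ftc_convex[OF f assms(2)] has_integral_const_real)
  then show ?thesis using assms(2) by (simp add: has_integral_Icc_iff_Ioo mult.commute)
qed

lemma ftc_shift2:
  assumes f: "convex_on UNIV f" and "y \<le> x"
  shows "((\<lambda>u. left_deriv f x - left_deriv f u) has_integral (left_deriv f x * (x - y) - (f x - f y))) {y<..<x}"
proof -
  have "((\<lambda>u. left_deriv f x - left_deriv f u) has_integral (Henstock_Kurzweil_Integration.content {y..x} *\<^sub>R left_deriv f x - (f x - f y))) {y..x}"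
    by (intro has_integral_diff ftc_convex[OF f assms(2)] has_integral_const_real)
  then show ?thesis using assms(2) by (simp add: has_integral_Icc_iff_Ioo mult.commute)
qed

lemma R1:
  assumes f: "convex_on UNIV f" and xy: "x < y"
  shows "(\<integral>\<^sup>+ s. ennreal (indicator {-y<..-x} s * (y + s)) \<partial>nu f)
       = ennreal (f y - f x - left_deriv f x * (y - x))"
proof -
  let ?g = "left_deriv f"
  interpret nu: sigma_finite_measure "nu f" by (rule sigma_finite_nu[OF f])
  interpret P: pair_sigma_finite "nu f" lborel ..
  define H where "H = (\<lambda>s u. if -y < s \<and> s \<le> -x \<and> -s < u \<and> u < y then 1 else (0::ennreal))"
  have meas: "case_prod H \<in> borel_measurable (nu f \<Otimes>\<^sub>M lborel)"
    unfolding H_def by measurable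
  have s1: "(\<integral>\<^sup>+ u. H s u \<partial>lborel) = ennreal (indicator {-y<..-x} s * (y + s))" for s
  proof -
    have "(\<lambda>u. H s u) = (\<lambda>u. indicator {-y<..-x} s * indicator {-s<..<y} u)"
      by (auto simp: H_def indicator_def fun_eq_iff)
    then have "(\<integral>\<^sup>+ u. H s u \<partial>lborel) = indicator {-y<..-x} s * emeasure lborel {-s<..<y}"
      by (simp add: nn_integral_cmult_indicator)
    then show ?thesis
      by (cases "s \<in> {-y<..-x}") (auto simp: indicator_def)
  qed
  have s3: "(\<integral>\<^sup>+ s. H s u \<partial>nu f) = ennreal (indicator {x<..<y} u * (?g u - ?g x))" for u
  proof -
    have "(\<lambda>s. H s u) = indicator (if u < y then {-u<..-x} else {})"
      by (auto simp: H_def indicator_def fun_eq_iff)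
    then have e: "(\<integral>\<^sup>+ s. H s u \<partial>nu f) = emeasure (nu f) (if u < y then {-u<..-x} else {})"
      by simp
    show ?thesis
    proof (cases "x < u \<and> u < y")
      case True
      then show ?thesis using e emeasure_nu[OF f, of "-u" "-x"] by simp
    next
      case False
      then have "(if u < y then {-u<..-x} else {}) = {}" by auto
      then show ?thesis using e False by (auto simp: indicator_def)
    qed
  qed
  have "(\<integral>\<^sup>+ s. ennreal (indicator {-y<..-x} s * (y + s)) \<partial>nu f) = (\<integral>\<^sup>+ s. (\<integral>\<^sup>+ u. H s u \<partial>lborel) \<partial>nu f)"
    by (simp add: s1)
  also have "\<dots> = (\<integral>\<^sup>+ u. (\<integral>\<^sup>+ s. H s u \<partial>nu f) \<partial>lborel)"
    using P.Fubini'[OF meas] by simp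
  also have "\<dots> = (\<integral>\<^sup>+ u. ennreal (indicator {x<..<y} u * (?g u - ?g x)) \<partial>lborel)"
    by (simp add: s3)
  also have "\<dots> = ennreal (f y - f x - ?g x * (y - x))"
    by (rule nn_integral_has_integral_lebesgue[OF _ ftc_shift[OF f]])
       (use xy ld_mono[OF f] in auto)
  finally show ?thesis .
qed

lemma R2:
  assumes f: "convex_on UNIV f" and xy: "y < x"
  shows "(\<integral>\<^sup>+ s. ennreal (indicator {-x<..-y} s * (- s - y)) \<partial>nu f)
       = ennreal (left_deriv f x * (x - y) - (f x - f y))"
proof -
  let ?g = "left_deriv f"
  interpret nu: sigma_finite_measure "nu f" by (rule sigma_finite_nu[OF f])
  interpret P: pair_sigma_finite "nu f" lborel ..
  define H where "H = (\<lambda>s u. if -x < s \<and> s \<le> -y \<and> y < u \<and> u \<le> -s then 1 else (0::ennreal))"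
  have meas: "case_prod H \<in> borel_measurable (nu f \<Otimes>\<^sub>M lborel)"
    unfolding H_def by measurable
  have s1: "(\<integral>\<^sup>+ u. H s u \<partial>lborel) = ennreal (indicator {-x<..-y} s * (- s - y))" for s
  proof -
    have "(\<lambda>u. H s u) = (\<lambda>u. indicator {-x<..-y} s * indicator {y<..-s} u)"
      by (auto simp: H_def indicator_def fun_eq_iff)
    then have "(\<integral>\<^sup>+ u. H s u \<partial>lborel) = indicator {-x<..-y} s * emeasure lborel {y<..-s}"
      by (simp add: nn_integral_cmult_indicator)
    then show ?thesis
      by (cases "s \<in> {-x<..-y}") (auto simp: indicator_def)
  qed
  have s3: "(\<integral>\<^sup>+ s. H s u \<partial>nu f) = ennreal (indicator {y<..<x} u * (?g x - ?g u))" for u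
  proof -
    have "(\<lambda>s. H s u) = indicator (if y < u then {-x<..-u} else {})"
      by (auto simp: H_def indicator_def fun_eq_iff)
    then have e: "(\<integral>\<^sup>+ s. H s u \<partial>nu f) = emeasure (nu f) (if y < u then {-x<..-u} else {})"
      by simp
    show ?thesis
    proof (cases "y < u \<and> u < x")
      case True
      then show ?thesis using e emeasure_nu[OF f, of "-x" "-u"] by simp
    next
      case False
      show ?thesis
      proof (cases "u = x")
        case True
        then show ?thesis using e xy by (simp add: indicator_def)
      next
        case False
        then have "(if y < u then {-x<..-u} else {}) = {}" using \<open>\<not> (y < u \<and> u < x)\<close> by auto
        then show ?thesis using e \<open>\<not> (y < u \<and> u < x)\<close> by (auto simp: indicator_def)
      qed
    qed
  qed
  have "(\<integral>\<^sup>+ s. ennreal (indicator {-x<..-y} s * (- s - y)) \<partial>nu f) = (\<integral>\<^sup>+ s. (\<integral>\<^sup>+ u. H s u \<partial>lborel) \<partial>nu f)"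
    by (simp add: s1)
  also have "\<dots> = (\<integral>\<^sup>+ u. (\<integral>\<^sup>+ s. H s u \<partial>nu f) \<partial>lborel)"
    using P.Fubini'[OF meas] by simp
  also have "\<dots> = (\<integral>\<^sup>+ u. ennreal (indicator {y<..<x} u * (?g x - ?g u)) \<partial>lborel)"
    by (simp add: s3)
  also have "\<dots> = ennreal (?g x * (x - y) - (f x - f y))"
    by (rule nn_integral_has_integral_lebesgue[OF _ ftc_shift2[OF f]])
       (use xy ld_mono[OF f] in auto)
  finally show ?thesis .
qed



lemma repr:
  assumes f: "convex_on UNIV f" and a0: "0 \<le> \<alpha>" and a1: "\<alpha> \<le> 1"
  shows "ennreal (expectile_score \<alpha> f x y) = (\<integral>\<^sup>+ s. ennreal (elem_expectile_score \<alpha> (-s) x y) \<partial>nu f)"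
proof -
  consider "x < y" | "y < x" | "x = y" by linarith
  then show ?thesis
  proof cases
    case 1
    have e: "elem_expectile_score \<alpha> (-s) x y = \<alpha> * (indicator {-y<..-x} s * (y + s))" for s
      using 1 a0 by (auto simp: elem_expectile_score_def indicator_def max_def)
    have "(\<integral>\<^sup>+ s. ennreal (elem_expectile_score \<alpha> (-s) x y) \<partial>nu f)
        = (\<integral>\<^sup>+ s. ennreal \<alpha> * ennreal (indicator {-y<..-x} s * (y + s)) \<partial>nu f)"
      by (simp add: e ennreal_mult' a0)
    also have "\<dots> = ennreal \<alpha> * (\<integral>\<^sup>+ s. ennreal (indicator {-y<..-x} s * (y + s)) \<partial>nu f)"
      by (rule nn_integral_cmult) simp
    also have "\<dots> = ennreal \<alpha> * ennreal (f y - f x - left_deriv f x * (y - x))"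
      by (simp add: R1[OF f 1])
    also have "\<dots> = ennreal (expectile_score \<alpha> f x y)"
      using 1 a0 by (simp add: expectile_score_def ennreal_mult')
    finally show ?thesis ..
  next
    case 2
    have e: "elem_expectile_score \<alpha> (-s) x y = (1 - \<alpha>) * (indicator {-x<..-y} s * (- s - y))" for s
      using 2 a1 by (auto simp: elem_expectile_score_def indicator_def max_def)
    have "(\<integral>\<^sup>+ s. ennreal (elem_expectile_score \<alpha> (-s) x y) \<partial>nu f)
        = (\<integral>\<^sup>+ s. ennreal (1 - \<alpha>) * ennreal (indicator {-x<..-y} s * (- s - y)) \<partial>nu f)"
      using a1 by (simp add: e ennreal_mult')
    also have "\<dots> = ennreal (1 - \<alpha>) * (\<integral>\<^sup>+ s. ennreal (indicator {-x<..-y} s * (- s - y)) \<partial>nu f)"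
      by (rule nn_integral_cmult) simp
    also have "\<dots> = ennreal (1 - \<alpha>) * ennreal (left_deriv f x * (x - y) - (f x - f y))"
      by (simp add: R2[OF f 2])
    also have "\<dots> = ennreal (expectile_score \<alpha> f x y)"
    proof -
      have "expectile_score \<alpha> f x y = (1 - \<alpha>) * (left_deriv f x * (x - y) - (f x - f y))"
        using 2 a1 by (simp add: expectile_score_def algebra_simps)
      then show ?thesis using a1 by (simp add: ennreal_mult')
    qed
    finally show ?thesis ..
  next
    case 3
    then show ?thesis by (simp add: elem_expectile_score_def expectile_score_def)
  qed
qed

theorem mainTheorem7:
  fixes M :: "'a measure" and X1 X2 Y :: "'a \<Rightarrow> real" and \<alpha> :: real
  assumes "prob_space M"
    and "0 < \<alpha>" and "\<alpha> < 1"
    and "X1 \<in> borel_measurable M" and "X2 \<in> borel_measurable M" and "Y \<in> borel_measurable M"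
    and "\<forall>\<theta>::real. (\<integral>\<^sup>+ \<omega>. ennreal (elem_expectile_score \<alpha> \<theta> (X1 \<omega>) (Y \<omega>)) \<partial>M)
                   \<le> (\<integral>\<^sup>+ \<omega>. ennreal (elem_expectile_score \<alpha> \<theta> (X2 \<omega>) (Y \<omega>)) \<partial>M)"
  shows "\<forall>S \<in> expectile_class \<alpha>.
           (\<integral>\<^sup>+ \<omega>. ennreal (S (X1 \<omega>) (Y \<omega>)) \<partial>M) \<le> (\<integral>\<^sup>+ \<omega>. ennreal (S (X2 \<omega>) (Y \<omega>)) \<partial>M)"
proof
  fix S assume "S \<in> expectile_class \<alpha>"
  then obtain f where f: "convex_on UNIV f" and S: "S = expectile_score \<alpha> f"
    unfolding expectile_class_def by blast
  interpret M: prob_space M by (rule assms(1))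
  interpret nu: sigma_finite_measure "nu f" by (rule sigma_finite_nu[OF f])
  interpret P: pair_sigma_finite M "nu f" ..
  have a0: "0 \<le> \<alpha>" "\<alpha> \<le> 1" using assms(2,3) by auto
  have X1[measurable]: "X1 \<in> borel_measurable M" and X2[measurable]: "X2 \<in> borel_measurable M"
    and Y[measurable]: "Y \<in> borel_measurable M" using assms by auto
  have m: "(\<lambda>(\<omega>, s). ennreal (elem_expectile_score \<alpha> (-s) (X \<omega>) (Y \<omega>))) \<in> borel_measurable (M \<Otimes>\<^sub>M nu f)"
    if [measurable]: "X \<in> borel_measurable M" for X
    unfolding elem_expectile_score_def by measurable
  have sw: "(\<integral>\<^sup>+ \<omega>. ennreal (S (X \<omega>) (Y \<omega>)) \<partial>M)
      = (\<integral>\<^sup>+ s. (\<integral>\<^sup>+ \<omega>. ennreal (elem_expectile_score \<alpha> (-s) (X \<omega>) (Y \<omega>)) \<partial>M) \<partial>nu f)"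
    if "X \<in> borel_measurable M" for X
  proof -
    have "(\<integral>\<^sup>+ \<omega>. ennreal (S (X \<omega>) (Y \<omega>)) \<partial>M)
       = (\<integral>\<^sup>+ \<omega>. (\<integral>\<^sup>+ s. ennreal (elem_expectile_score \<alpha> (-s) (X \<omega>) (Y \<omega>)) \<partial>nu f) \<partial>M)"
      unfolding S by (simp add: repr[OF f a0])
    also have "\<dots> = (\<integral>\<^sup>+ s. (\<integral>\<^sup>+ \<omega>. ennreal (elem_expectile_score \<alpha> (-s) (X \<omega>) (Y \<omega>)) \<partial>M) \<partial>nu f)"
      using P.Fubini'[OF m[OF that]] by simp
    finally show ?thesis .
  qed
  have "(\<integral>\<^sup>+ s. (\<integral>\<^sup>+ \<omega>. ennreal (elem_expectile_score \<alpha> (-s) (X1 \<omega>) (Y \<omega>)) \<partial>M) \<partial>nu f)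
     \<le> (\<integral>\<^sup>+ s. (\<integral>\<^sup>+ \<omega>. ennreal (elem_expectile_score \<alpha> (-s) (X2 \<omega>) (Y \<omega>)) \<partial>M) \<partial>nu f)"
    by (rule nn_integral_mono) (use assms(7) in blast)
  then show "(\<integral>\<^sup>+ \<omega>. ennreal (S (X1 \<omega>) (Y \<omega>)) \<partial>M) \<le> (\<integral>\<^sup>+ \<omega>. ennreal (S (X2 \<omega>) (Y \<omega>)) \<partial>M)"
    using sw[OF X1] sw[OF X2] by simp
qed


end
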